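(* Let $c$ and $k$ be non-negative integers, let $p$ be a prime, let $G$ be a finitely generated pro-$p$ group of nilpotency class $c$, and let $K=G^{p^k}$. (a) Suppose $p$ is odd and $k-1\geq \log_p(c+1)$. Then $[N,K]\leq N^p$ for every normal subgroup $N$ of $G$; in particular $K$ is powerful. (b) Suppose $p=2$ and $k-2\geq \log_2(c+1)$. Then $[N,K]\leq N^4$ for every normal subgroup $N$ of $G$; in particular $K$ is powerful.
   Context: In pro-$p$ groups, subgroups are closed and generation is topological. For a (pro-)$p$ group $H$, $H^{p^j}$ denotes the (closed) subgroup generated by all $p^j$-th powers of elements of $H$, and $[H,L]$ is the (closed) subgroup generated by commutators $[x,y]=x^{-1}y^{-1}xy$, $x\in H$, $y\in L$. A (pro-)$p$ group $H$ is powerful if $[H,H]\leq H^p$ for $p$ odd, and $[H,H]\leq H^4$ for $p=2$. *)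

theory Defs
  imports "HOL-Algebra.Algebra" "HOL-Analysis.Analysis"
begin

definition topological_group :: "('a, 'b) monoid_scheme \<Rightarrow> 'a topology \<Rightarrow> bool" where
  "topological_group G T \<longleftrightarrow> group G \<and> topspace T = carrier G
     \<and> continuous_map (prod_topology T T) T (\<lambda>(x, y). x \<otimes>\<^bsub>G\<^esub> y)
     \<and> continuous_map T T (\<lambda>x. inv\<^bsub>G\<^esub> x)"

definition pro_p_group :: "nat \<Rightarrow> ('a, 'b) monoid_scheme \<Rightarrow> 'a topology \<Rightarrow> bool" where
  "pro_p_group p G T \<longleftrightarrow> topological_group G T \<and> compact_space T \<and> Hausdorff_space T
     \<and> (\<forall>U. openin T U \<and> \<one>\<^bsub>G\<^esub> \<in> U \<longrightarrow> (\<exists>N. N \<lhd> G \<and> openin T N \<and> N \<subseteq> U))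
     \<and> (\<forall>N. N \<lhd> G \<and> openin T N \<longrightarrow> (\<exists>m. card (rcosets\<^bsub>G\<^esub> N) = p ^ m))"

definition cgen :: "('a, 'b) monoid_scheme \<Rightarrow> 'a topology \<Rightarrow> 'a set \<Rightarrow> 'a set" where
  "cgen G T S = T closure_of (generate G S)"

definition topologically_finitely_generated :: "('a, 'b) monoid_scheme \<Rightarrow> 'a topology \<Rightarrow> bool" where
  "topologically_finitely_generated G T \<longleftrightarrow>
     (\<exists>S. finite S \<and> S \<subseteq> carrier G \<and> cgen G T S = carrier G)"

definition gcomm :: "('a, 'b) monoid_scheme \<Rightarrow> 'a \<Rightarrow> 'a \<Rightarrow> 'a" where
  "gcomm G x y = inv\<^bsub>G\<^esub> x \<otimes>\<^bsub>G\<^esub> inv\<^bsub>G\<^esub> y \<otimes>\<^bsub>G\<^esub> x \<otimes>\<^bsub>G\<^esub> y"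

definition comm_sub :: "('a, 'b) monoid_scheme \<Rightarrow> 'a topology \<Rightarrow> 'a set \<Rightarrow> 'a set \<Rightarrow> 'a set" where
  "comm_sub G T H L = cgen G T {gcomm G x y | x y. x \<in> H \<and> y \<in> L}"

definition pow_sub :: "('a, 'b) monoid_scheme \<Rightarrow> 'a topology \<Rightarrow> 'a set \<Rightarrow> nat \<Rightarrow> 'a set" where
  "pow_sub G T H n = cgen G T {x [^]\<^bsub>G\<^esub> n | x. x \<in> H}"

text \<open>Lower central series: gamma 1 = G, gamma (i+1) = [gamma i, G].\<close>
fun lcs :: "('a, 'b) monoid_scheme \<Rightarrow> 'a topology \<Rightarrow> nat \<Rightarrow> 'a set" where
  "lcs G T 0 = carrier G"
| "lcs G T (Suc i) = (if i = 0 then carrier G else comm_sub G T (lcs G T i) (carrier G))"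

definition nilpotency_class :: "('a, 'b) monoid_scheme \<Rightarrow> 'a topology \<Rightarrow> nat \<Rightarrow> bool" where
  "nilpotency_class G T c \<longleftrightarrow> lcs G T (Suc c) = {\<one>\<^bsub>G\<^esub>}
     \<and> (c = 0 \<or> lcs G T c \<noteq> {\<one>\<^bsub>G\<^esub>})"

definition powerful :: "nat \<Rightarrow> ('a, 'b) monoid_scheme \<Rightarrow> 'a topology \<Rightarrow> 'a set \<Rightarrow> bool" where
  "powerful p G T H \<longleftrightarrow>
     (if p = 2 then comm_sub G T H H \<subseteq> pow_sub G T H 4
      else comm_sub G T H H \<subseteq> pow_sub G T H p)"

end

theory Submission
  imports Defs
begin


context group begin

lemma cancel_l[simp]: "x \<in> carrier G \<Longrightarrow> y \<in> carrier G \<Longrightarrow> inv x \<otimes> (x \<otimes> y) = y"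
  by (simp add: m_assoc[symmetric])
lemma cancel_r[simp]: "x \<in> carrier G \<Longrightarrow> y \<in> carrier G \<Longrightarrow> x \<otimes> (inv x \<otimes> y) = y"
  by (simp add: m_assoc[symmetric])

lemmas gs = m_assoc inv_mult_group inv_inv l_inv r_inv l_one r_one inv_closed m_closed cancel_l cancel_r

lemma gcomm_def': "gcomm G x y = inv x \<otimes> (inv y \<otimes> (x \<otimes> y))"
  if "x \<in> carrier G" "y \<in> carrier G" using that by (simp add: gcomm_def m_assoc)

lemma gcomm_closed[simp]: "x \<in> carrier G \<Longrightarrow> y \<in> carrier G \<Longrightarrow> gcomm G x y \<in> carrier G"
  by (simp add: gcomm_def)

lemma hall_witt:
  assumes [simp]: "c \<in> carrier G" "g \<in> carrier G" "a \<in> carrier G"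
  shows "(inv (inv g) \<otimes> gcomm G (gcomm G c g) a \<otimes> inv g) \<otimes>
         (inv a \<otimes> gcomm G (gcomm G (inv g) (inv a)) c \<otimes> a) \<otimes>
         (inv c \<otimes> gcomm G (gcomm G a (inv c)) (inv g) \<otimes> c) = \<one>"
  by (simp add: gcomm_def' gs)

lemma comm_right_mult:
  assumes [simp]: "a \<in> carrier G" "b \<in> carrier G" "b' \<in> carrier G"
  shows "gcomm G a (b \<otimes> b') = gcomm G a b' \<otimes> (inv b' \<otimes> gcomm G a b \<otimes> b')"
  by (simp add: gcomm_def' gs)

lemma comm_right_inv:
  assumes [simp]: "a \<in> carrier G" "b \<in> carrier G"
  shows "gcomm G a (inv b) = b \<otimes> inv (gcomm G a b) \<otimes> inv b"
  by (simp add: gcomm_def' gs)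

lemma comm_left_mult:
  assumes [simp]: "a \<in> carrier G" "a' \<in> carrier G" "b \<in> carrier G"
  shows "gcomm G (a \<otimes> a') b = (inv a' \<otimes> gcomm G a b \<otimes> a') \<otimes> gcomm G a' b"
  by (simp add: gcomm_def' gs)

lemma comm_left_inv:
  assumes [simp]: "a \<in> carrier G" "b \<in> carrier G"
  shows "gcomm G (inv a) b = a \<otimes> inv (gcomm G a b) \<otimes> inv a"
  by (simp add: gcomm_def' gs)

lemma comm_inv: 
  assumes [simp]: "a \<in> carrier G" "b \<in> carrier G"
  shows "inv (gcomm G a b) = gcomm G b a"
  by (simp add: gcomm_def' gs)

lemma comm_one_right[simp]: "a \<in> carrier G \<Longrightarrow> gcomm G a \<one> = \<one>"
  by (simp add: gcomm_def' gs)
lemma comm_one_left[simp]: "a \<in> carrier G \<Longrightarrow> gcomm G \<one> a = \<one>"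
  by (simp add: gcomm_def' gs)

lemma normal_conj1: "M \<lhd> G \<Longrightarrow> x \<in> carrier G \<Longrightarrow> h \<in> M \<Longrightarrow> inv x \<otimes> h \<otimes> x \<in> M"
  by (rule normal.inv_op_closed1)
lemma normal_conj2: "M \<lhd> G \<Longrightarrow> x \<in> carrier G \<Longrightarrow> h \<in> M \<Longrightarrow> x \<otimes> h \<otimes> inv x \<in> M"
  by (rule normal.inv_op_closed2)

lemma subgroup_centr_right:
  assumes M: "M \<lhd> G" and a: "a \<in> carrier G"
  shows "subgroup {b \<in> carrier G. gcomm G a b \<in> M} G"
proof -
  have sM: "subgroup M G" using M normal_imp_subgroup by blast
  show ?thesis
  proof (rule subgroupI)
    show "{b \<in> carrier G. gcomm G a b \<in> M} \<noteq> {}" using a subgroup.one_closed[OF sM] by auto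
  next
    fix b assume b: "b \<in> {b \<in> carrier G. gcomm G a b \<in> M}"
    then show "inv b \<in> {b \<in> carrier G. gcomm G a b \<in> M}"
      using a comm_right_inv[of a b] normal_conj2[OF M, of b] subgroup.m_inv_closed[OF sM] by auto
  next
    fix b b' assume b: "b \<in> {b \<in> carrier G. gcomm G a b \<in> M}" and b': "b' \<in> {b \<in> carrier G. gcomm G a b \<in> M}"
    then show "b \<otimes> b' \<in> {b \<in> carrier G. gcomm G a b \<in> M}"
      using a comm_right_mult[of a b b'] normal_conj1[OF M, of b'] subgroup.m_closed[OF sM] by auto
  qed auto
qed

lemma subgroup_centr_left:
  assumes M: "M \<lhd> G" and b: "b \<in> carrier G"
  shows "subgroup {a \<in> carrier G. gcomm G a b \<in> M} G"
proof -
  have sM: "subgroup M G" using M normal_imp_subgroup by blast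
  show ?thesis
  proof (rule subgroupI)
    show "{a \<in> carrier G. gcomm G a b \<in> M} \<noteq> {}" using b subgroup.one_closed[OF sM] by auto
  next
    fix a assume "a \<in> {a \<in> carrier G. gcomm G a b \<in> M}"
    then show "inv a \<in> {a \<in> carrier G. gcomm G a b \<in> M}"
      using b comm_left_inv[of a b] normal_conj2[OF M, of a] subgroup.m_inv_closed[OF sM] by auto
  next
    fix a a' assume "a \<in> {a \<in> carrier G. gcomm G a b \<in> M}" and "a' \<in> {a \<in> carrier G. gcomm G a b \<in> M}"
    then show "a \<otimes> a' \<in> {a \<in> carrier G. gcomm G a b \<in> M}"
      using b comm_left_mult[of a a' b] normal_conj1[OF M, of a'] subgroup.m_closed[OF sM] by auto
  qed auto
qed

lemma comm_gen_right:
  assumes M: "M \<lhd> G" and a: "a \<in> carrier G" and S: "S \<subseteq> carrier G"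
    and h: "\<And>b. b \<in> S \<Longrightarrow> gcomm G a b \<in> M" and b: "b \<in> generate G S"
  shows "gcomm G a b \<in> M"
proof -
  have "generate G S \<subseteq> {b \<in> carrier G. gcomm G a b \<in> M}"
    by (rule generate_subgroup_incl[OF _ subgroup_centr_right[OF M a]]) (use S h in auto)
  then show ?thesis using b by auto
qed

lemma comm_gen_left:
  assumes M: "M \<lhd> G" and b: "b \<in> carrier G" and S: "S \<subseteq> carrier G"
    and h: "\<And>a. a \<in> S \<Longrightarrow> gcomm G a b \<in> M" and a: "a \<in> generate G S"
  shows "gcomm G a b \<in> M"
proof -
  have "generate G S \<subseteq> {a \<in> carrier G. gcomm G a b \<in> M}"
    by (rule generate_subgroup_incl[OF _ subgroup_centr_left[OF M b]]) (use S h in auto)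
  then show ?thesis using a by auto
qed

lemma comm_gen_both:
  assumes M: "M \<lhd> G" and S: "S \<subseteq> carrier G" and S': "S' \<subseteq> carrier G"
    and h: "\<And>a b. a \<in> S \<Longrightarrow> b \<in> S' \<Longrightarrow> gcomm G a b \<in> M"
    and a: "a \<in> generate G S" and b: "b \<in> generate G S'"
  shows "gcomm G a b \<in> M"
proof -
  have bc: "b \<in> carrier G" using b S' generate_in_carrier by blast
  show ?thesis
    apply (rule comm_gen_left[OF M bc S _ a])
    apply (rule comm_gen_right[OF M _ S' _ b])
    using S h by auto
qed

end




fun ccs :: "('a, 'b) monoid_scheme \<Rightarrow> 'a set \<Rightarrow> nat \<Rightarrow> 'a set" where
  "ccs G N 0 = N"
| "ccs G N (Suc t) = generate G {gcomm G a g | a g. a \<in> ccs G N t \<and> g \<in> carrier G}"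

declare ccs.simps(2)[simp del]

context group begin

lemma conj_comm:
  assumes [simp]: "x \<in> carrier G" "a \<in> carrier G" "g \<in> carrier G"
  shows "x \<otimes> gcomm G a g \<otimes> inv x = gcomm G (x \<otimes> a \<otimes> inv x) (x \<otimes> g \<otimes> inv x)"
  by (simp add: gcomm_def' gs)

lemma ccs_normal: "N \<lhd> G \<Longrightarrow> ccs G N t \<lhd> G"
proof (induction t)
  case 0 then show ?case by simp
next
  case (Suc t)
  have sub: "ccs G N t \<subseteq> carrier G" using Suc normal_imp_subgroup subgroup.subset by blast
  show ?case unfolding ccs.simps
  proof (rule normal_generateI)
    show "{gcomm G a g |a g. a \<in> ccs G N t \<and> g \<in> carrier G} \<subseteq> carrier G" using sub by auto
  next
    fix h g assume h: "h \<in> {gcomm G a g |a g. a \<in> ccs G N t \<and> g \<in> carrier G}" and g: "g \<in> carrier G"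
    then obtain a x where ax: "h = gcomm G a x" "a \<in> ccs G N t" "x \<in> carrier G" by auto
    have "g \<otimes> h \<otimes> inv g = gcomm G (g \<otimes> a \<otimes> inv g) (g \<otimes> x \<otimes> inv g)"
      using ax sub g conj_comm by auto
    moreover have "g \<otimes> a \<otimes> inv g \<in> ccs G N t" using normal_conj2[OF Suc.IH[OF Suc.prems] g ax(2)] .
    ultimately show "g \<otimes> h \<otimes> inv g \<in> {gcomm G a g |a g. a \<in> ccs G N t \<and> g \<in> carrier G}"
      using g ax by auto
  qed
qed

lemma ccs_carrier: "N \<lhd> G \<Longrightarrow> ccs G N t \<subseteq> carrier G"
  using ccs_normal normal_imp_subgroup subgroup.subset by blast

lemma comm_in_ccs: "N \<lhd> G \<Longrightarrow> a \<in> ccs G N t \<Longrightarrow> g \<in> carrier G \<Longrightarrow> gcomm G a g \<in> ccs G N (Suc t)"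
  by (auto simp: ccs.simps intro!: generate.incl)

lemma comm_in_ccs': "N \<lhd> G \<Longrightarrow> a \<in> ccs G N t \<Longrightarrow> g \<in> carrier G \<Longrightarrow> gcomm G g a \<in> ccs G N (Suc t)"
proof -
  assume N: "N \<lhd> G" and a: "a \<in> ccs G N t" and g: "g \<in> carrier G"
  have ac: "a \<in> carrier G" using ccs_carrier[OF N] a by auto
  have "gcomm G g a = inv (gcomm G a g)" using comm_inv[OF ac g] ..
  then show ?thesis using a g by (auto simp: ccs.simps intro!: generate.inv)
qed

lemma ccs_Suc_sub: "N \<lhd> G \<Longrightarrow> ccs G N (Suc t) \<subseteq> ccs G N t"
proof -
  assume N: "N \<lhd> G"
  have nt: "ccs G N t \<lhd> G" using ccs_normal[OF N] .
  show ?thesis unfolding ccs.simps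
  proof (rule generate_subgroup_incl[OF _ normal_imp_subgroup[OF nt]])
    show "{gcomm G a g |a g. a \<in> ccs G N t \<and> g \<in> carrier G} \<subseteq> ccs G N t"
    proof clarify
      fix a g assume a: "a \<in> ccs G N t" and g: "g \<in> carrier G"
      have ac: "a \<in> carrier G" using ccs_carrier[OF N] a by auto
      have "gcomm G a g = inv a \<otimes> (inv g \<otimes> a \<otimes> g)" using ac g by (simp add: gcomm_def' gs)
      moreover have "inv g \<otimes> a \<otimes> g \<in> ccs G N t" using normal_conj1[OF nt g a] .
      moreover have "inv a \<in> ccs G N t" using subgroup.m_inv_closed[OF normal_imp_subgroup[OF nt] a] .
      ultimately show "gcomm G a g \<in> ccs G N t" using subgroup.m_closed[OF normal_imp_subgroup[OF nt]] by simp
    qed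
  qed
qed

lemma ccs_antimono: assumes N: "N \<lhd> G" and ij: "i \<le> j" shows "ccs G N j \<subseteq> ccs G N i"
  using ij by (induction j rule: dec_induct) (use ccs_Suc_sub[OF N] in blast)+

lemma ccs_mono_set: "N \<subseteq> M \<Longrightarrow> ccs G N t \<subseteq> ccs G M t"
proof (induction t)
  case 0 then show ?case by simp
next
  case (Suc t)
  show ?case unfolding ccs.simps by (rule mono_generate) (use Suc in blast)
qed

lemma ccs_three:
  assumes N: "N \<lhd> G"
  shows "a \<in> ccs G N i \<Longrightarrow> b \<in> ccs G N j \<Longrightarrow> gcomm G a b \<in> ccs G N (i + j + 1)"
proof (induction j arbitrary: i a b)
  case 0
  then show ?case using comm_in_ccs[OF N, of a i b] N normal_imp_subgroup subgroup.subset by fastforce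
next
  case (Suc j)
  let ?M = "ccs G N (i + Suc j + 1)"
  have M: "?M \<lhd> G" using ccs_normal[OF N] .
  have sM: "subgroup ?M G" using normal_imp_subgroup[OF M] .
  have ac: "a \<in> carrier G" using ccs_carrier[OF N] Suc.prems by auto
  have S: "{gcomm G c g |c g. c \<in> ccs G N j \<and> g \<in> carrier G} \<subseteq> carrier G"
    using ccs_carrier[OF N] by (auto intro!: gcomm_closed)
  have key: "gcomm G a b \<in> ?M" if bS: "b \<in> {gcomm G c g |c g. c \<in> ccs G N j \<and> g \<in> carrier G}" for b
  proof -
    obtain c g where b: "b = gcomm G c g" and c: "c \<in> ccs G N j" and g: "g \<in> carrier G" using bS by blast
    have cc: "c \<in> carrier G" using ccs_carrier[OF N] c by auto
    let ?w1 = "inv (inv g) \<otimes> gcomm G (gcomm G c g) a \<otimes> inv g"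
    let ?w2 = "inv a \<otimes> gcomm G (gcomm G (inv g) (inv a)) c \<otimes> a"
    let ?w3 = "inv c \<otimes> gcomm G (gcomm G a (inv c)) (inv g) \<otimes> c"
    have hw: "?w1 \<otimes> ?w2 \<otimes> ?w3 = \<one>" using hall_witt[OF cc g ac] .
    have ai: "inv a \<in> ccs G N i" using subgroup.m_inv_closed[OF normal_imp_subgroup[OF ccs_normal[OF N]] Suc.prems(1)] .
    have ci: "inv c \<in> ccs G N j" using subgroup.m_inv_closed[OF normal_imp_subgroup[OF ccs_normal[OF N]] c] .
    have "gcomm G (inv g) (inv a) \<in> ccs G N (Suc i)"
      using comm_in_ccs'[OF N ai] g by auto
    then have "gcomm G (gcomm G (inv g) (inv a)) c \<in> ccs G N (Suc i + j + 1)"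
      using Suc.IH c by blast
    then have w2: "?w2 \<in> ?M" using normal_conj1[OF M ac] by simp
    have "gcomm G a (inv c) \<in> ccs G N (i + j + 1)" using Suc.IH[OF Suc.prems(1) ci] .
    then have "gcomm G (gcomm G a (inv c)) (inv g) \<in> ccs G N (Suc (i + j + 1))"
      using comm_in_ccs[OF N _ inv_closed[OF g]] by blast
    then have w3: "?w3 \<in> ?M" using normal_conj1[OF M cc] by simp
    have c1: "?w1 \<in> carrier G" "?w2 \<in> carrier G" "?w3 \<in> carrier G" using ac cc g by auto
    have "?w1 = inv (?w2 \<otimes> ?w3)"
    proof -
      have "?w1 = ?w1 \<otimes> ?w2 \<otimes> ?w3 \<otimes> inv (?w2 \<otimes> ?w3)" using c1 by (simp add: gs)
      also have "\<dots> = inv (?w2 \<otimes> ?w3)" using hw c1 by simp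
      finally show ?thesis .
    qed
    then have w1: "?w1 \<in> ?M" using w2 w3 sM subgroup.m_closed subgroup.m_inv_closed by metis
    have "gcomm G (gcomm G c g) a = inv g \<otimes> ?w1 \<otimes> g" using c1 ac cc g by (simp add: gs)
    then have "gcomm G (gcomm G c g) a \<in> ?M" using normal_conj1[OF M g w1] by simp
    then have "inv (gcomm G (gcomm G c g) a) \<in> ?M" using subgroup.m_inv_closed[OF sM] by blast
    moreover have "inv (gcomm G (gcomm G c g) a) = gcomm G a (gcomm G c g)"
      using comm_inv[of "gcomm G c g" a] ac cc g by simp
    ultimately show ?thesis using b by simp
  qed
  show ?case
    using comm_gen_right[OF M ac S key] Suc.prems(2) by (simp add: ccs.simps(2))
qed

end



definition Dq :: "('a, 'b) monoid_scheme \<Rightarrow> (nat \<Rightarrow> 'a) \<Rightarrow> nat \<Rightarrow> 'a" where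
  "Dq G g n = inv\<^bsub>G\<^esub> (g n) \<otimes>\<^bsub>G\<^esub> g (Suc n)"

fun Bp :: "('a, 'b) monoid_scheme \<Rightarrow> (nat \<Rightarrow> 'a) \<Rightarrow> nat \<Rightarrow> nat \<Rightarrow> 'a" where
  "Bp G e 0 n = \<one>\<^bsub>G\<^esub>"
| "Bp G e (Suc d) n = Bp G e d n \<otimes>\<^bsub>G\<^esub> e d [^]\<^bsub>G\<^esub> (n choose d)"

context group begin

lemma sub_pow_closed: "subgroup H G \<Longrightarrow> x \<in> H \<Longrightarrow> x [^] (n::nat) \<in> H"
  by (induction n) (auto intro: subgroup.one_closed subgroup.m_closed)

lemma funpow_vals:
  assumes H: "subgroup H G" shows "(\<And>n. g n \<in> H) \<Longrightarrow> (Dq G ^^ t) g n \<in> H"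
proof (induction t arbitrary: g n)
  case 0 then show ?case by simp
next
  case (Suc t)
  have "(Dq G ^^ Suc t) g = (Dq G ^^ t) (Dq G g)" by (simp add: funpow_Suc_right del: funpow.simps)
  moreover have "Dq G g n \<in> H" for n using Suc.prems H unfolding Dq_def
    by (simp add: subgroup.m_closed subgroup.m_inv_closed)
  ultimately show ?case using Suc.IH by metis
qed

lemma AN:
  assumes H: "H \<lhd> G"
  shows "(\<And>n. (Dq G ^^ Suc m) s n \<in> H) \<Longrightarrow> (\<And>j. j < m \<Longrightarrow> s j = \<one>) \<Longrightarrow> (\<And>n. s n \<in> carrier G)
    \<Longrightarrow> inv (s m [^] (n choose m)) \<otimes> s n \<in> H"
proof (induction m arbitrary: s n)
  case 0
  have sH: "subgroup H G" using H normal_imp_subgroup by blast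
  have D: "Dq G s n \<in> H" for n using 0(1)[of n] by simp
  show ?case
  proof (induction n)
    case 0 then show ?case using \<open>\<And>n. s n \<in> carrier G\<close>[of 0] subgroup.one_closed[OF sH] by simp
  next
    case (Suc n)
    have "inv (s 0 [^] (Suc n choose 0)) \<otimes> s (Suc n) = (inv (s 0 [^] (n choose 0)) \<otimes> s n) \<otimes> Dq G s n"
      using \<open>\<And>n. s n \<in> carrier G\<close> by (simp add: Dq_def gs)
    then show ?case using Suc D[of n] subgroup.m_closed[OF sH] by metis
  qed
next
  case (Suc m)
  have sH: "subgroup H G" using H normal_imp_subgroup by blast
  have sc: "\<And>n. s n \<in> carrier G" by fact
  let ?s' = "Dq G s"
  have s'c: "?s' n \<in> carrier G" for n using sc by (simp add: Dq_def)
  have "(Dq G ^^ Suc m) ?s' n \<in> H" for n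
    using Suc.prems(1)[of n] by (simp add: funpow_Suc_right del: funpow.simps)
  moreover have "?s' j = \<one>" if "j < m" for j using Suc.prems(2) that by (simp add: Dq_def)
  ultimately have IH: "inv (?s' m [^] (n choose m)) \<otimes> ?s' n \<in> H" for n
    using Suc.IH[of ?s'] s'c by blast
  have sm: "s m = \<one>" using Suc.prems(2) by simp
  define c where "c = s (Suc m)"
  have cc: "c \<in> carrier G" using sc c_def by simp
  have s'm: "?s' m = c" using sm sc c_def by (simp add: Dq_def)
  show ?case
  proof (induction n)
    case 0 then show ?case using Suc.prems(2)[of 0] subgroup.one_closed[OF sH] c_def by simp
  next
    case (Suc n)
    define a where "a = n choose Suc m"
    define b where "b = n choose m"
    define x where "x = inv (c [^] a) \<otimes> s n"
    define y where "y = inv (c [^] b) \<otimes> ?s' n"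
    have x: "x \<in> H" using Suc c_def a_def x_def by simp
    have y: "y \<in> H" using IH[of n] s'm b_def y_def by simp
    have xc: "x \<in> carrier G" using x sH by (meson subgroup.mem_carrier)
    have yc: "y \<in> carrier G" using y sH by (meson subgroup.mem_carrier)
    have sn: "s n = c [^] a \<otimes> x" using x_def cc sc by (simp add: gs)
    have s'n: "?s' n = c [^] b \<otimes> y" using y_def cc s'c by (simp add: gs)
    have sSn: "s (Suc n) = s n \<otimes> ?s' n" using sc by (simp add: Dq_def gs)
    have "Suc n choose Suc m = a + b" using a_def b_def by simp
    then have "inv (s (Suc m) [^] (Suc n choose Suc m)) \<otimes> s (Suc n)
        = inv (c [^] a \<otimes> c [^] b) \<otimes> (c [^] a \<otimes> x \<otimes> (c [^] b \<otimes> y))"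
      using sSn sn s'n c_def cc by (simp add: nat_pow_mult)
    also have "\<dots> = (inv (c [^] b) \<otimes> x \<otimes> c [^] b) \<otimes> y" using cc xc yc by (simp add: gs)
    finally show ?case using normal_conj1[OF H _ x, of "c [^] b"] y cc subgroup.m_closed[OF sH] by simp
  qed
qed

end

locale filt = group G for G (structure) +
  fixes F :: "nat \<Rightarrow> 'a set"
  assumes F_normal: "F i \<lhd> G"
    and F_Suc: "F (Suc i) \<subseteq> F i"
    and F_comm: "a \<in> F i \<Longrightarrow> b \<in> F j \<Longrightarrow> gcomm G a b \<in> F (i + j)"
begin

lemma F_sub: "subgroup (F i) G" using F_normal normal_imp_subgroup by blast
lemma F_carr: "x \<in> F i \<Longrightarrow> x \<in> carrier G" using F_sub[of i] by (rule subgroup.mem_carrier)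
lemma F_anti: "i \<le> j \<Longrightarrow> F j \<subseteq> F i"
  by (induction j rule: dec_induct) (simp, metis F_Suc subset_trans)

definition P :: "nat \<Rightarrow> nat \<Rightarrow> (nat \<Rightarrow> 'a) \<Rightarrow> bool" where
  "P a e g \<longleftrightarrow> (\<forall>t n. (Dq G ^^ t) g n \<in> F (min (a + t) e))"

lemma P_iff: "P a e g \<longleftrightarrow> (\<forall>n. g n \<in> F (min a e)) \<and> P (a + 1) e (Dq G g)"
proof
  assume h: "P a e g"
  have "(\<forall>n. g n \<in> F (min a e))" using h[unfolded P_def, rule_format, of 0] by simp
  moreover have "P (a + 1) e (Dq G g)" unfolding P_def
  proof (intro allI)
    fix t n show "(Dq G ^^ t) (Dq G g) n \<in> F (min (a + 1 + t) e)"
      using h[unfolded P_def, rule_format, of "Suc t" n] by (simp add: funpow_Suc_right del: funpow.simps)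
  qed
  ultimately show "(\<forall>n. g n \<in> F (min a e)) \<and> P (a + 1) e (Dq G g)" ..
next
  assume h: "(\<forall>n. g n \<in> F (min a e)) \<and> P (a + 1) e (Dq G g)"
  show "P a e g" unfolding P_def
  proof (intro allI)
    fix t n show "(Dq G ^^ t) g n \<in> F (min (a + t) e)"
    proof (cases t)
      case 0 then show ?thesis using h by simp
    next
      case (Suc t')
      then show ?thesis using h[THEN conjunct2, unfolded P_def, rule_format, of t' n]
        by (simp add: funpow_Suc_right del: funpow.simps)
    qed
  qed
qed

lemma P_vals: "P a e g \<Longrightarrow> g n \<in> F (min a e)" unfolding P_def by (metis add_0_right funpow_0)
lemma P_D: "P a e g \<Longrightarrow> P (Suc a) e (Dq G g)" using P_iff[of a e g] by simp
lemma P_carr: "P a e g \<Longrightarrow> g n \<in> carrier G" using P_vals F_carr by metis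

lemma P_mono: "P a e g \<Longrightarrow> a' \<le> a \<Longrightarrow> e' \<le> e \<Longrightarrow> P a' e' g"
  unfolding P_def
proof (intro allI)
  fix t n assume h: "\<forall>t n. (Dq G ^^ t) g n \<in> F (min (a + t) e)" and le: "a' \<le> a" "e' \<le> e"
  have "min (a' + t) e' \<le> min (a + t) e" using le by (simp add: min_def)
  then show "(Dq G ^^ t) g n \<in> F (min (a' + t) e')" using h F_anti by blast
qed

lemma P_const: "(\<And>n. g n \<in> F e) \<Longrightarrow> P a e g"
  unfolding P_def
proof (intro allI)
  fix t n assume h: "\<And>n. g n \<in> F e"
  have "(Dq G ^^ t) g n \<in> F e" using funpow_vals[OF F_sub] h by blast
  moreover have "F e \<subseteq> F (min (a + t) e)" using F_anti by simp
  ultimately show "(Dq G ^^ t) g n \<in> F (min (a + t) e)" by blast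
qed

lemma D_mult:
  assumes "\<And>n. g n \<in> carrier G" "\<And>n. h n \<in> carrier G"
  shows "Dq G (\<lambda>n. g n \<otimes> h n) = (\<lambda>n. Dq G g n \<otimes> gcomm G (Dq G g n) (h n) \<otimes> Dq G h n)"
  using assms by (auto simp: Dq_def gcomm_def' gs)

definition "MM E l \<longleftrightarrow> (\<forall>g h. P l E g \<longrightarrow> P l E h \<longrightarrow> P l E (\<lambda>n. g n \<otimes> h n))"
definition "CC E l \<longleftrightarrow> (\<forall>a b e1 e2 u v. a + b = l \<longrightarrow> a \<le> e1 \<longrightarrow> b \<le> e2 \<longrightarrow> E \<le> e1 + b \<longrightarrow> E \<le> e2 + a
    \<longrightarrow> P a e1 u \<longrightarrow> P b e2 v \<longrightarrow> P l E (\<lambda>n. gcomm G (u n) (v n)))"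

lemma high: assumes "E \<le> l" shows "MM E l \<and> CC E l"
proof
  show "MM E l" unfolding MM_def
  proof (intro allI impI)
    fix g h assume "P l E g" "P l E h"
    then have "g n \<otimes> h n \<in> F E" for n using P_vals[of l E g n] P_vals[of l E h n] assms
      subgroup.m_closed[OF F_sub] by (simp add: min_absorb2)
    then show "P l E (\<lambda>n. g n \<otimes> h n)" by (rule P_const)
  qed
next
  show "CC E l" unfolding CC_def
  proof (intro allI impI)
    fix a b e1 e2 u v assume h: "a + b = l" "a \<le> e1" "b \<le> e2" "P a e1 u" "P b e2 v"
    have "gcomm G (u n) (v n) \<in> F E" for n
    proof -
      have "u n \<in> F a" "v n \<in> F b" using P_vals[OF h(4), of n] P_vals[OF h(5), of n] h by (simp_all add: min_absorb1)
      then have "gcomm G (u n) (v n) \<in> F l" using F_comm h(1) by blast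
      then show ?thesis using F_anti assms by blast
    qed
    then show "P l E (\<lambda>n. gcomm G (u n) (v n))" by (rule P_const)
  qed
qed

end



context filt begin

lemma step:
  assumes lE: "l < E" and outer: "\<forall>l'. CC (E - 1) l'" and hi: "\<forall>l'>l. MM E l' \<and> CC E l'"
  shows "MM E l \<and> CC E l"
proof -
  have Mr: "\<And>g h. P (Suc l) E g \<Longrightarrow> P (Suc l) E h \<Longrightarrow> P (Suc l) E (\<lambda>n. g n \<otimes> h n)"
    using hi unfolding MM_def by (meson lessI)
  have Cr: "P (Suc l) E (\<lambda>n. gcomm G (u n) (v n))"
    if h: "l < a + b" "a \<le> e1" "b \<le> e2" "E \<le> e1 + b" "E \<le> e2 + a" "P a e1 u" "P b e2 v"
    for a b e1 e2 u v
  proof -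
    have "CC E (a + b)" using hi h(1) by blast
    then have "P (a + b) E (\<lambda>n. gcomm G (u n) (v n))" unfolding CC_def using h by blast
    then show ?thesis by (rule P_mono) (use h(1) in auto)
  qed
  have Cl: "P (a + b) (E - 1) (\<lambda>n. gcomm G (u n) (v n))"
    if "a \<le> e1" "b \<le> e2" "E - 1 \<le> e1 + b" "E - 1 \<le> e2 + a" "P a e1 u" "P b e2 v"
    for a b e1 e2 u v
    using outer that unfolding CC_def by blast
  show ?thesis
  proof
    show "MM E l" unfolding MM_def
    proof (intro allI impI)
      fix g h assume g: "P l E g" and h: "P l E h"
      have gc: "\<And>n. g n \<in> carrier G" "\<And>n. h n \<in> carrier G" using P_carr g h by blast+
      have Dg: "P (Suc l) E (Dq G g)" "P (Suc l) E (Dq G h)" using P_D g h by auto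
      have c: "P (Suc l) E (\<lambda>n. gcomm G (Dq G g n) (h n))"
        by (rule Cr[OF _ _ _ _ _ Dg(1) h]) (use lE in auto)
      have "P (Suc l) E (Dq G (\<lambda>n. g n \<otimes> h n))"
        unfolding D_mult[OF gc] using Mr[OF Mr[OF Dg(1) c] Dg(2)] .
      moreover have "\<forall>n. g n \<otimes> h n \<in> F (min l E)"
        using P_vals[OF g] P_vals[OF h] subgroup.m_closed[OF F_sub] by blast
      ultimately show "P l E (\<lambda>n. g n \<otimes> h n)" using P_iff[of l E "\<lambda>n. g n \<otimes> h n"] by simp
    qed
  next
    show "CC E l" unfolding CC_def
    proof (intro allI impI)
      fix a b e1 e2 u v
      assume ab: "a + b = l" "a \<le> e1" "b \<le> e2" "E \<le> e1 + b" "E \<le> e2 + a"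
        and Pu: "P a e1 u" and Pv: "P b e2 v"
      have lt: "a < e1" "b < e2" using ab lE by arith+
      have uc: "\<And>n. u n \<in> carrier G" using P_carr Pu by blast
      have vc: "\<And>n. v n \<in> carrier G" using P_carr Pv by blast
      define A where "A = Dq G u"
      define B where "B = Dq G v"
      have PA: "P (Suc a) e1 A" using P_D Pu A_def by simp
      have PB: "P (Suc b) e2 B" using P_D Pv B_def by simp
      define XX where "XX = (\<lambda>n. gcomm G (u n) (v n))"
      define T1 where "T1 = (\<lambda>n. gcomm G (u n) (B n))"
      define T2 where "T2 = (\<lambda>n. gcomm G (T1 n) (A n))"
      define W where "W = (\<lambda>n. T1 n \<otimes> T2 n)"
      define T3 where "T3 = (\<lambda>n. gcomm G (W n) (XX n))"
      define T4 where "T4 = (\<lambda>n. gcomm G (XX n) (A n))"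
      define T5 where "T5 = (\<lambda>n. gcomm G (XX n) (B n))"
      define T6 where "T6 = (\<lambda>n. gcomm G (T5 n) (A n))"
      define T7 where "T7 = (\<lambda>n. gcomm G (A n) (B n))"
      define T8 where "T8 = (\<lambda>n. gcomm G (A n) (v n))"
      define T9 where "T9 = (\<lambda>n. gcomm G (T8 n) (B n))"
      have DX: "Dq G XX = (\<lambda>n. W n \<otimes> T3 n \<otimes> T4 n \<otimes> T5 n \<otimes> T6 n \<otimes> T7 n \<otimes> T8 n \<otimes> T9 n)"
      proof
        fix n
        have [simp]: "u n \<in> carrier G" "v n \<in> carrier G" "u (Suc n) \<in> carrier G" "v (Suc n) \<in> carrier G"
          using uc vc by auto
        show "Dq G XX n = W n \<otimes> T3 n \<otimes> T4 n \<otimes> T5 n \<otimes> T6 n \<otimes> T7 n \<otimes> T8 n \<otimes> T9 n"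
          unfolding XX_def W_def T1_def T2_def T3_def T4_def T5_def T6_def T7_def T8_def T9_def A_def B_def
          by (simp add: Dq_def gcomm_def' gs)
      qed
      have P1: "P (Suc l) E T1" unfolding T1_def by (rule Cr[OF _ _ _ _ _ Pu PB]) (use ab lt in auto)
      have P2: "P (Suc l) E T2" unfolding T2_def by (rule Cr[OF _ _ _ _ _ P1 PA]) (use ab lt lE in auto)
      have PW: "P (Suc l) E W" unfolding W_def by (rule Mr[OF P1 P2])
      have PX: "P l (E - 1) XX" unfolding XX_def using Cl[OF ab(2) ab(3) _ _ Pu Pv] ab by simp
      have P3: "P (Suc l) E T3" unfolding T3_def by (rule Cr[OF _ _ _ _ _ PW PX]) (use ab lt lE in auto)
      have P4: "P (Suc l) E T4" unfolding T4_def by (rule Cr[OF _ _ _ _ _ PX PA]) (use ab lt lE in auto)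
      have P5: "P (Suc l) E T5" unfolding T5_def by (rule Cr[OF _ _ _ _ _ PX PB]) (use ab lt lE in auto)
      have P6: "P (Suc l) E T6" unfolding T6_def by (rule Cr[OF _ _ _ _ _ P5 PA]) (use ab lt lE in auto)
      have P7: "P (Suc l) E T7" unfolding T7_def by (rule Cr[OF _ _ _ _ _ PA PB]) (use ab lt lE in auto)
      have P8: "P (Suc l) E T8" unfolding T8_def by (rule Cr[OF _ _ _ _ _ PA Pv]) (use ab lt lE in auto)
      have P9: "P (Suc l) E T9" unfolding T9_def by (rule Cr[OF _ _ _ _ _ P8 PB]) (use ab lt lE in auto)
      have PDX: "P (Suc l) E (Dq G XX)" unfolding DX
        using Mr[OF Mr[OF Mr[OF Mr[OF Mr[OF Mr[OF Mr[OF PW P3] P4] P5] P6] P7] P8] P9] .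
      have "\<forall>n. XX n \<in> F (min l E)"
      proof
        fix n
        have "u n \<in> F a" "v n \<in> F b" using P_vals[OF Pu, of n] P_vals[OF Pv, of n] ab
          by (simp_all add: min_absorb1)
        then have "XX n \<in> F l" unfolding XX_def using F_comm ab(1) by blast
        then show "XX n \<in> F (min l E)" using F_anti[of "min l E" l] by auto
      qed
      then have "P l E XX" using PDX P_iff[of l E XX] by simp
      then show "P l E (\<lambda>n. gcomm G (u n) (v n))" unfolding XX_def .
    qed
  qed
qed

lemma LM_fixedE:
  assumes outer: "0 < E \<Longrightarrow> \<forall>l'. CC (E - 1) l'"
  shows "MM E l \<and> CC E l"
proof (induction "E - l" arbitrary: l rule: less_induct)
  case less
  show ?case
  proof (cases "E \<le> l")
    case True then show ?thesis using high by blast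
  next
    case False
    have hi: "\<forall>l'>l. MM E l' \<and> CC E l'" using less False by auto
    show ?thesis using step[OF _ outer hi] False by auto
  qed
qed

lemma LM_all: "MM E l \<and> CC E l"
proof (induction E arbitrary: l rule: less_induct)
  case (less E)
  show ?case by (rule LM_fixedE) (use less in auto)
qed

lemma P_mult: "P l E g \<Longrightarrow> P l E h \<Longrightarrow> P l E (\<lambda>n. g n \<otimes> h n)"
  using LM_all unfolding MM_def by blast

end



context filt begin

lemma D_binom:
  assumes ec: "e \<in> carrier G"
  shows "(Dq G ^^ s) (\<lambda>n. e [^] (n choose t)) = (\<lambda>n. if s \<le> t then e [^] (n choose (t - s)) else \<one>)"
proof (induction s)
  case 0 then show ?case by simp
next
  case (Suc s)
  have "(Dq G ^^ Suc s) (\<lambda>n. e [^] (n choose t)) = Dq G ((Dq G ^^ s) (\<lambda>n. e [^] (n choose t)))" by simp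
  also have "\<dots> = Dq G (\<lambda>n. if s \<le> t then e [^] (n choose (t - s)) else \<one>)" using Suc by simp
  also have "\<dots> = (\<lambda>n. if Suc s \<le> t then e [^] (n choose (t - Suc s)) else \<one>)"
  proof
    fix n
    consider "s < t" | "s = t" | "t < s" by arith
    then show "Dq G (\<lambda>n. if s \<le> t then e [^] (n choose (t - s)) else \<one>) n =
               (if Suc s \<le> t then e [^] (n choose (t - Suc s)) else \<one>)"
    proof cases
      case 1
      then obtain k where k: "t - s = Suc k" "t - Suc s = k" by (metis Suc_diff_Suc)
      have "Dq G (\<lambda>n. if s \<le> t then e [^] (n choose (t - s)) else \<one>) n
          = inv (e [^] (n choose Suc k)) \<otimes> (e [^] (n choose Suc k) \<otimes> e [^] (n choose k))"
        using 1 k ec by (simp add: Dq_def nat_pow_mult add.commute)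
      also have "\<dots> = e [^] (n choose k)" using ec by simp
      finally show ?thesis using 1 k by simp
    next
      case 2 then show ?thesis using ec by (simp add: Dq_def)
    next
      case 3 then show ?thesis by (simp add: Dq_def)
    qed
  qed
  finally show ?case .
qed

lemma P_binom: "e \<in> F t \<Longrightarrow> P 0 E (\<lambda>n. e [^] (n choose t))"
  unfolding P_def
proof (intro allI)
  fix s n assume e: "e \<in> F t"
  have ec: "e \<in> carrier G" using F_carr e by blast
  show "(Dq G ^^ s) (\<lambda>n. e [^] (n choose t)) n \<in> F (min (0 + s) E)"
  proof (cases "s \<le> t")
    case True
    have "e [^] (n choose (t - s)) \<in> F t" using sub_pow_closed[OF F_sub e] .
    moreover have "F t \<subseteq> F (min (0 + s) E)" using F_anti True by simp
    ultimately show ?thesis unfolding D_binom[OF ec] using True by auto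
  next
    case False then show ?thesis unfolding D_binom[OF ec] using subgroup.one_closed[OF F_sub] by simp
  qed
qed

lemma Bp_carr: "(\<And>t. e t \<in> carrier G) \<Longrightarrow> Bp G e d n \<in> carrier G"
  by (induction d) auto

lemma Bp_cong: "(\<And>t. t < d \<Longrightarrow> e t = e' t) \<Longrightarrow> Bp G e d n = Bp G e' d n"
  by (induction d) auto

lemma inv_B: assumes e: "\<And>t. e t \<in> F t" shows "P 0 E (\<lambda>n. inv (Bp G e d n))"
proof (induction d)
  case 0
  show ?case by (rule P_const) (simp add: subgroup.one_closed[OF F_sub])
next
  case (Suc d)
  have ec: "\<And>t. e t \<in> carrier G" using e F_carr by blast
  have "(\<lambda>n. inv (Bp G e (Suc d) n)) = (\<lambda>n. inv (e d) [^] (n choose d) \<otimes> inv (Bp G e d n))"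
    using ec Bp_carr[of e] by (simp add: nat_pow_inv inv_mult_group)
  moreover have "P 0 E (\<lambda>n. inv (e d) [^] (n choose d))"
    by (rule P_binom) (use subgroup.m_inv_closed[OF F_sub e] in simp)
  ultimately show ?case using P_mult Suc by simp
qed

lemma R: "P 0 d g \<Longrightarrow> \<exists>e. (\<forall>t. e t \<in> F t) \<and> (\<forall>n<d. Bp G e d n = g n) \<and> (\<forall>n. inv (Bp G e d n) \<otimes> g n \<in> F d)"
proof (induction d arbitrary: g)
  case 0
  have "inv (Bp G (\<lambda>_. \<one>) 0 n) \<otimes> g n \<in> F 0" for n using P_vals[OF 0, of n] F_carr by simp
  moreover have "\<forall>t. (\<lambda>_. \<one>) t \<in> F t" using subgroup.one_closed[OF F_sub] by simp
  ultimately show ?case by (intro exI[of _ "\<lambda>_. \<one>"]) auto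
next
  case (Suc d)
  have gc: "\<And>n. g n \<in> carrier G" using P_carr Suc.prems by blast
  have "P 0 d g" using P_mono[OF Suc.prems] by simp
  then obtain e where e: "\<forall>t. e t \<in> F t" and ei: "\<forall>n<d. Bp G e d n = g n"
    and er: "\<forall>n. inv (Bp G e d n) \<otimes> g n \<in> F d" using Suc.IH by blast
  have ec: "\<And>t. e t \<in> carrier G" using e F_carr by blast
  have Bc: "\<And>n. Bp G e d n \<in> carrier G" using Bp_carr ec by blast
  define r where "r = (\<lambda>n. inv (Bp G e d n) \<otimes> g n)"
  have Pr: "P 0 (Suc d) r" unfolding r_def by (rule P_mult[OF inv_B[OF spec[OF e]] Suc.prems])
  have rc: "\<And>n. r n \<in> carrier G" using Bc gc r_def by simp
  have rj: "r j = \<one>" if "j < d" for j using ei that gc Bc r_def by simp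
  have "(Dq G ^^ Suc d) r n \<in> F (Suc d)" for n using Pr unfolding P_def by (metis add_0 min.idem)
  then have AN': "inv (r d [^] (n choose d)) \<otimes> r n \<in> F (Suc d)" for n
    using AN[OF F_normal, of d r] rj rc by blast
  define e' where "e' = e(d := r d)"
  have e'1: "\<forall>t. e' t \<in> F t" using e er r_def e'_def by simp
  have Bsame: "Bp G e' d n = Bp G e d n" for n by (rule Bp_cong) (simp add: e'_def)
  have BS: "Bp G e' (Suc d) n = Bp G e d n \<otimes> r d [^] (n choose d)" for n
    using Bsame e'_def by simp
  have "\<forall>n<Suc d. Bp G e' (Suc d) n = g n"
  proof (intro allI impI)
    fix n assume n: "n < Suc d"
    show "Bp G e' (Suc d) n = g n"
    proof (cases "n < d")
      case True
      then have "n choose d = 0" by simp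
      then show ?thesis using BS[of n] ei Bc[of n] True by (simp del: Bp.simps add: binomial_eq_0)
    next
      case False then have "n = d" using n by simp
      have "Bp G e' (Suc d) d = Bp G e d d \<otimes> r d [^] (d choose d)" by (rule BS)
      also have "\<dots> = Bp G e d d \<otimes> r d" using rc by simp
      also have "\<dots> = g d" using r_def Bc gc by (simp add: gs)
      finally show ?thesis using \<open>n = d\<close> by simp
    qed
  qed
  moreover have "\<forall>n. inv (Bp G e' (Suc d) n) \<otimes> g n \<in> F (Suc d)"
  proof
    fix n
    have "inv (Bp G e' (Suc d) n) \<otimes> g n = inv (r d [^] (n choose d)) \<otimes> r n"
      using BS Bc gc rc r_def by (simp add: gs)
    then show "inv (Bp G e' (Suc d) n) \<otimes> g n \<in> F (Suc d)" using AN' by simp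
  qed
  ultimately show ?case using e'1 by blast
qed

lemma Bp_zero: "Bp G e (Suc d) 0 = e 0" if "e 0 \<in> carrier G"
  using that by (induction d) auto

lemma newton_final:
  assumes Pg: "P 0 Dd g" and g0: "g 0 = \<one>" and FD: "F Dd \<subseteq> C" and C: "subgroup C G"
    and pw: "\<And>w. w \<in> F 1 \<Longrightarrow> w [^] q \<in> C"
    and dv: "\<And>t. 0 < t \<Longrightarrow> t < Dd \<Longrightarrow> q dvd (N choose t)"
  shows "g N \<in> C"
proof -
  obtain e where e: "\<forall>t. e t \<in> F t" and ei: "\<forall>n<Dd. Bp G e Dd n = g n"
    and er: "\<forall>n. inv (Bp G e Dd n) \<otimes> g n \<in> F Dd" using R[OF Pg] by blast
  have ec: "\<And>t. e t \<in> carrier G" using e F_carr by blast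
  have e0: "e 0 = \<one>" if Dpos: "0 < Dd"
  proof -
    obtain d where d: "Dd = Suc d" using Dpos by (cases Dd) auto
    have "Bp G e Dd 0 = g 0" using ei Dpos by blast
    then have "Bp G e (Suc d) 0 = \<one>" using d g0 by metis
    moreover have "Bp G e (Suc d) 0 = e 0" by (rule Bp_zero[where e=e, OF ec[of 0]])
    ultimately show ?thesis by metis
  qed
  have "d \<le> Dd \<Longrightarrow> Bp G e d N \<in> C" for d
  proof (induction d)
    case 0 then show ?case using subgroup.one_closed[OF C] by simp
  next
    case (Suc d)
    have "e d [^] (N choose d) \<in> C"
    proof (cases "d = 0")
      case True then show ?thesis using e0 Suc.prems subgroup.one_closed[OF C] by simp
    next
      case False
      have "q dvd (N choose d)" using dv[of d] Suc.prems False by simp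
      then obtain k where k: "N choose d = q * k" by (rule dvdE)
      have "e d \<in> F 1" using e F_anti[of 1 d] False by auto
      then have "e d [^] q \<in> C" by (rule pw)
      then have "(e d [^] q) [^] k \<in> C" by (rule sub_pow_closed[OF C])
      then show ?thesis using k nat_pow_pow[OF ec] by simp
    qed
    moreover have "Bp G e d N \<in> C" using Suc by simp
    ultimately show ?case using subgroup.m_closed[OF C] by simp
  qed
  then have B: "Bp G e Dd N \<in> C" by simp
  have "inv (Bp G e Dd N) \<otimes> g N \<in> C" using er FD by auto
  then have "Bp G e Dd N \<otimes> (inv (Bp G e Dd N) \<otimes> g N) \<in> C" using B subgroup.m_closed[OF C] by blast
  moreover have "g N \<in> carrier G" by (rule P_carr[OF Pg])
  moreover have "Bp G e Dd N \<in> carrier G" by (rule Bp_carr[OF ec])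
  ultimately show ?thesis by (simp del: Bp.simps add: gs)
qed

end



context group begin

lemma comm_normal_left: "C \<lhd> G \<Longrightarrow> a \<in> C \<Longrightarrow> b \<in> carrier G \<Longrightarrow> gcomm G a b \<in> C"
proof -
  assume C: "C \<lhd> G" and a: "a \<in> C" and b: "b \<in> carrier G"
  have ac: "a \<in> carrier G" using C a normal_imp_subgroup subgroup.mem_carrier by metis
  have "gcomm G a b = inv a \<otimes> (inv b \<otimes> a \<otimes> b)" using ac b by (simp add: gcomm_def' gs)
  moreover have "inv b \<otimes> a \<otimes> b \<in> C" by (rule normal_conj1[OF C b a])
  moreover have "inv a \<in> C" using C a normal_imp_subgroup subgroup.m_inv_closed by metis
  ultimately show ?thesis using C normal_imp_subgroup subgroup.m_closed by metis
qed

lemma comm_normal_right: "C \<lhd> G \<Longrightarrow> b \<in> C \<Longrightarrow> a \<in> carrier G \<Longrightarrow> gcomm G a b \<in> C"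
proof -
  assume C: "C \<lhd> G" and b: "b \<in> C" and a: "a \<in> carrier G"
  have bc: "b \<in> carrier G" using C b normal_imp_subgroup subgroup.mem_carrier by metis
  have "gcomm G a b = (inv a \<otimes> inv b \<otimes> inv (inv a)) \<otimes> b" using bc a by (simp add: gcomm_def' gs)
  moreover have "inv a \<otimes> inv b \<otimes> inv (inv a) \<in> C"
    using normal_conj2[OF C inv_closed[OF a]] C b normal_imp_subgroup subgroup.m_inv_closed by metis
  ultimately show ?thesis using C b normal_imp_subgroup subgroup.m_closed by metis
qed

definition NC :: "'a set \<Rightarrow> 'a set \<Rightarrow> 'a set" where
  "NC N C = {w. \<exists>n\<in>N. \<exists>c\<in>C. w = n \<otimes> c}"

lemma NC_subgroup:
  assumes N: "N \<lhd> G" and C: "C \<lhd> G" shows "subgroup (NC N C) G"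
proof -
  have sN: "subgroup N G" and sC: "subgroup C G" using N C normal_imp_subgroup by auto
  have Nc: "\<And>n. n \<in> N \<Longrightarrow> n \<in> carrier G" using sN subgroup.mem_carrier by metis
  have Cc: "\<And>n. n \<in> C \<Longrightarrow> n \<in> carrier G" using sC subgroup.mem_carrier by metis
  show ?thesis
  proof (rule subgroupI)
    show "NC N C \<subseteq> carrier G" unfolding NC_def using Nc Cc by auto
  next
    have "\<one> = \<one> \<otimes> \<one>" by simp
    then show "NC N C \<noteq> {}" unfolding NC_def using subgroup.one_closed[OF sN] subgroup.one_closed[OF sC]
      by blast
  next
    fix w assume "w \<in> NC N C"
    then obtain n c where n: "n \<in> N" and c: "c \<in> C" and w: "w = n \<otimes> c" unfolding NC_def by auto
    have "inv w = inv n \<otimes> (n \<otimes> inv c \<otimes> inv n)" using w Nc[OF n] Cc[OF c] by (simp add: gs)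
    moreover have "n \<otimes> inv c \<otimes> inv n \<in> C"
      using normal_conj2[OF C Nc[OF n] subgroup.m_inv_closed[OF sC c]] .
    moreover have "inv n \<in> N" using subgroup.m_inv_closed[OF sN n] .
    ultimately show "inv w \<in> NC N C" unfolding NC_def by blast
  next
    fix w w' assume "w \<in> NC N C" "w' \<in> NC N C"
    then obtain n c n' c' where n: "n \<in> N" and c: "c \<in> C" and w: "w = n \<otimes> c"
      and n': "n' \<in> N" and c': "c' \<in> C" and w': "w' = n' \<otimes> c'" unfolding NC_def by auto
    have "w \<otimes> w' = (n \<otimes> n') \<otimes> ((inv n' \<otimes> c \<otimes> n') \<otimes> c')"
      using w w' Nc[OF n] Cc[OF c] Nc[OF n'] Cc[OF c'] by (simp add: gs)
    moreover have "inv n' \<otimes> c \<otimes> n' \<in> C" using normal_conj1[OF C Nc[OF n'] c] .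
    ultimately show "w \<otimes> w' \<in> NC N C" unfolding NC_def
      using subgroup.m_closed[OF sN n n'] subgroup.m_closed[OF sC _ c'] by blast
  qed
qed

lemma NC_pow:
  assumes N: "N \<lhd> G" and C: "C \<lhd> G" and n: "n \<in> N" and c: "c \<in> C"
  shows "\<exists>c'\<in>C. (n \<otimes> c) [^] (m::nat) = n [^] m \<otimes> c'"
proof (induction m)
  case 0 show ?case using subgroup.one_closed[OF normal_imp_subgroup[OF C]] by (intro bexI[of _ \<one>]) auto
next
  case (Suc m)
  have sC: "subgroup C G" using C normal_imp_subgroup by auto
  have nc: "n \<in> carrier G" using N n normal_imp_subgroup subgroup.mem_carrier by metis
  have cc: "c \<in> carrier G" using sC c subgroup.mem_carrier by metis
  obtain c1 where c1: "c1 \<in> C" and e: "(n \<otimes> c) [^] m = n [^] m \<otimes> c1" using Suc by blast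
  have c1c: "c1 \<in> carrier G" using sC c1 subgroup.mem_carrier by metis
  have "(n \<otimes> c) [^] Suc m = n [^] Suc m \<otimes> ((inv n \<otimes> c1 \<otimes> n) \<otimes> c)"
    using e nc cc c1c by (simp add: gs)
  moreover have "(inv n \<otimes> c1 \<otimes> n) \<otimes> c \<in> C"
    using normal_conj1[OF C nc c1] c subgroup.m_closed[OF sC] by blast
  ultimately show ?case by blast
qed

lemma core:
  assumes N: "N \<lhd> G" and C: "C \<lhd> G" and pw: "\<And>w. w \<in> N \<Longrightarrow> w [^] q \<in> C"
    and nil: "ccs G N c \<subseteq> {\<one>}"
    and dv: "\<And>t. 0 < t \<Longrightarrow> t < c \<Longrightarrow> q dvd (M choose t)"
    and x: "x \<in> N" and y: "y \<in> carrier G"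
  shows "gcomm G x (y [^] M) \<in> C"
proof -
  have sC: "subgroup C G" using C normal_imp_subgroup by auto
  have Cc: "C \<subseteq> carrier G" using sC subgroup.subset by auto
  have xc: "x \<in> carrier G" using N x normal_imp_subgroup subgroup.mem_carrier by metis
  define F where "F = (\<lambda>t. generate G (ccs G N t \<union> C))"
  have Fsub: "ccs G N t \<union> C \<subseteq> carrier G" for t using ccs_carrier[OF N] Cc by auto
  have Fn: "F t \<lhd> G" for t unfolding F_def
  proof (rule normal_generateI[OF Fsub])
    fix h g assume h: "h \<in> ccs G N t \<union> C" and g: "g \<in> carrier G"
    show "g \<otimes> h \<otimes> inv g \<in> ccs G N t \<union> C"
      using h normal_conj2[OF ccs_normal[OF N] g] normal_conj2[OF C g] by blast
  qed
  have FS: "F (Suc t) \<subseteq> F t" for t unfolding F_def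
    by (rule mono_generate) (use ccs_Suc_sub[OF N, of t] in blast)
  have FC: "gcomm G a b \<in> F (i + j)" if a: "a \<in> F i" and b: "b \<in> F j" for a b i j
  proof (rule comm_gen_both[OF Fn Fsub Fsub _ a[unfolded F_def] b[unfolded F_def]])
    fix a b assume a: "a \<in> ccs G N i \<union> C" and b: "b \<in> ccs G N j \<union> C"
    have ac: "a \<in> carrier G" and bc: "b \<in> carrier G" using a b Fsub by auto
    show "gcomm G a b \<in> F (i + j)"
    proof (cases "a \<in> C \<or> b \<in> C")
      case True
      then have "gcomm G a b \<in> C" using comm_normal_left[OF C _ bc] comm_normal_right[OF C _ ac] by blast
      then show ?thesis unfolding F_def by (blast intro: generate.incl)
    next
      case False
      then have "gcomm G a b \<in> ccs G N (i + j + 1)" using ccs_three[OF N] a b by blast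
      then have "gcomm G a b \<in> ccs G N (i + j)" using ccs_Suc_sub[OF N] by auto
      then show ?thesis unfolding F_def by (blast intro: generate.incl)
    qed
  qed
  interpret fl: filt G F
    by (rule filt.intro[OF is_group filt_axioms.intro[OF Fn FS FC]])
  define g where "g = (\<lambda>n::nat. gcomm G x (y [^] n))"
  define K where "K = (\<lambda>w (n::nat). inv (y [^] n) \<otimes> w \<otimes> y [^] n)"
  define it where "it = (\<lambda>t. ((\<lambda>w. gcomm G w y) ^^ t) x)"
  have itS: "it (Suc t) = gcomm G (it t) y" for t unfolding it_def by simp
  have itc: "it t \<in> ccs G N t" for t
    by (induction t) (simp_all add: it_def x comm_in_ccs[OF N _ y])
  have itcar: "it t \<in> carrier G" for t using itc ccs_carrier[OF N] by blast
  have Dg: "Dq G g = K (it 1)"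
  proof
    fix n
    have ys: "y [^] Suc n = y \<otimes> y [^] n" using nat_pow_Suc2[OF y] .
    show "Dq G g n = K (it 1) n" unfolding g_def K_def it_def Dq_def ys
      using xc y by (simp add: gcomm_def' gs)
  qed
  have DK: "Dq G (K w) = K (gcomm G w y)" if w: "w \<in> carrier G" for w
  proof
    fix n
    have ys: "y [^] Suc n = y \<otimes> y [^] n" using nat_pow_Suc2[OF y] .
    show "Dq G (K w) n = K (gcomm G w y) n" unfolding K_def Dq_def ys
      using w y by (simp add: gcomm_def' gs)
  qed
  have Dt: "(Dq G ^^ Suc t) g = K (it (Suc t))" for t
  proof (induction t)
    case 0 then show ?case using Dg by simp
  next
    case (Suc t)
    have "(Dq G ^^ Suc (Suc t)) g = Dq G ((Dq G ^^ Suc t) g)" by simp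
    also have "\<dots> = Dq G (K (it (Suc t)))" by (simp only: Suc.IH)
    also have "\<dots> = K (gcomm G (it (Suc t)) y)" by (rule DK[OF itcar])
    also have "\<dots> = K (it (Suc (Suc t)))" by (simp only: itS)
    finally show ?case .
  qed
  have Pg: "fl.P 0 c g" unfolding fl.P_def
  proof (intro allI)
    fix t n
    have inF: "w \<in> ccs G N t \<Longrightarrow> w \<in> F t" for w unfolding F_def by (blast intro: generate.incl)
    have "(Dq G ^^ t) g n \<in> F t"
    proof (cases t)
      case 0
      have "g n = inv x \<otimes> (inv (y [^] n) \<otimes> x \<otimes> y [^] n)" unfolding g_def using xc y by (simp add: gcomm_def' gs)
      moreover have "inv (y [^] n) \<otimes> x \<otimes> y [^] n \<in> N" using normal_conj1[OF N _ x] y by simp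
      moreover have "inv x \<in> N" using subgroup.m_inv_closed[OF normal_imp_subgroup[OF N] x] .
      ultimately have "g n \<in> N" using subgroup.m_closed[OF normal_imp_subgroup[OF N]] by metis
      then show ?thesis using 0 inF by simp
    next
      case (Suc t')
      have "K (it t) n \<in> ccs G N t" unfolding K_def using normal_conj1[OF ccs_normal[OF N] _ itc] y by simp
      then show ?thesis using Suc Dt inF by simp
    qed
    moreover have "F t \<subseteq> F (min (0 + t) c)" using fl.F_anti by simp
    ultimately show "(Dq G ^^ t) g n \<in> F (min (0 + t) c)" by blast
  qed
  have g0: "g 0 = \<one>" unfolding g_def using xc by simp
  have FD: "F c \<subseteq> C" unfolding F_def
    by (rule generate_subgroup_incl[OF _ sC]) (use nil subgroup.one_closed[OF sC] in blast)
  have pwF: "w [^] q \<in> C" if w: "w \<in> F 1" for w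
  proof -
    have "F 1 \<subseteq> generate G (N \<union> C)" unfolding F_def
      by (rule mono_generate) (use ccs_antimono[OF N, of 0 1] in auto)
    also have "\<dots> \<subseteq> NC N C"
    proof (rule generate_subgroup_incl[OF _ NC_subgroup[OF N C]])
      show "N \<union> C \<subseteq> NC N C"
      proof
        fix z assume z: "z \<in> N \<union> C"
        show "z \<in> NC N C"
        proof (cases "z \<in> N")
          case True
          then have "z = z \<otimes> \<one>" using N normal_imp_subgroup subgroup.mem_carrier by fastforce
          then show ?thesis unfolding NC_def using True subgroup.one_closed[OF sC] by blast
        next
          case False
          then have zc: "z \<in> C" using z by blast
          then have "z = \<one> \<otimes> z" using Cc by auto
          then show ?thesis unfolding NC_def using zc subgroup.one_closed[OF normal_imp_subgroup[OF N]] by blast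
        qed
      qed
    qed
    finally obtain n c0 where n: "n \<in> N" and c0: "c0 \<in> C" and ww: "w = n \<otimes> c0" using w unfolding NC_def by blast
    obtain c' where c': "c' \<in> C" and e: "(n \<otimes> c0) [^] q = n [^] q \<otimes> c'" using NC_pow[OF N C n c0] by blast
    show ?thesis using e ww pw[OF n] c' subgroup.m_closed[OF sC] by simp
  qed
  have "g M \<in> C" by (rule fl.newton_final[OF Pg g0 FD sC pwF dv])
  then show ?thesis unfolding g_def .
qed

end



lemma log_bound:
  assumes p: "(2::nat) \<le> p" and h: "log (real p) (real c + 1) \<le> real k - real j"
  shows "j \<le> k \<and> c + 1 \<le> p ^ (k - j)"
proof -
  have p1: "1 < real p" using p by simp
  have "0 \<le> log (real p) (real c + 1)" using p1 by simp
  then have jk: "j \<le> k" using h by linarith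
  have "real c + 1 \<le> real p powr (real k - real j)" using h log_le_iff[OF p1, of "real c + 1"] by simp
  also have "real k - real j = real (k - j)" using jk by simp
  also have "real p powr real (k - j) = real p ^ (k - j)" using p1 by (simp add: powr_realpow)
  finally have "real (c + 1) \<le> real (p ^ (k - j))" by simp
  then show ?thesis using jk by linarith
qed

lemma binom_dvd:
  assumes p: "Factorial_Ring.prime (p::nat)" and t: "0 < t" and le: "t * p ^ j \<le> p ^ k"
  shows "p ^ j dvd (p ^ k choose t)"
proof -
  have p1: "1 < p" using p prime_gt_1_nat by blast
  have pj: "1 \<le> p ^ j" using p1 by simp
  have tk: "t \<le> p ^ k" using le pj by (metis le_trans mult_le_mono2 mult.right_neutral)
  define b where "b = p ^ k choose t"
  have b0: "b \<noteq> 0" using tk b_def by simp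
  have "t * b = p ^ k * ((p ^ k - 1) choose (t - 1))" using times_binomial_minus1_eq[OF t] b_def by simp
  then have dv: "p ^ k dvd t * b" by simp
  have nu: "\<not> is_unit p" using p1 by simp
  have tb0: "t * b \<noteq> 0" using t b0 by simp
  have "k \<le> multiplicity p (t * b)" by (rule multiplicity_geI[OF tb0 nu dv])
  also have "\<dots> = multiplicity p t + multiplicity p b"
    using prime_elem_multiplicity_mult_distrib[of p t b] p t b0 by (simp add: prime_imp_prime_elem)
  finally have k: "k \<le> multiplicity p t + multiplicity p b" .
  have "p ^ multiplicity p t \<le> t" using multiplicity_dvd[of p t] t by (simp add: dvd_imp_le)
  then have "p ^ (multiplicity p t + j) \<le> p ^ k"
    using le by (metis mult_le_mono1 order_trans power_add)
  then have "multiplicity p t + j \<le> k" using power_le_imp_le_exp[OF p1] by blast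
  then have "j \<le> multiplicity p b" using k by linarith
  then show ?thesis using multiplicity_dvd' b_def by blast
qed




locale tg = group G for G (structure) +
  fixes T :: "'a topology"
  assumes top: "topspace T = carrier G"
    and cm: "continuous_map (prod_topology T T) T (\<lambda>(x, y). x \<otimes> y)"
    and ci: "continuous_map T T (\<lambda>x. inv x)"
begin

lemma cont_mult: "continuous_map T T f \<Longrightarrow> continuous_map T T g \<Longrightarrow> continuous_map T T (\<lambda>z. f z \<otimes> g z)"
proof -
  assume f: "continuous_map T T f" and g: "continuous_map T T g"
  have "continuous_map T T ((\<lambda>(x, y). x \<otimes> y) \<circ> (\<lambda>z. (f z, g z)))"
    by (rule continuous_map_compose[OF continuous_map_pairedI[OF f g] cm])
  then show ?thesis by (simp add: comp_def)
qed

lemma cont_inv: "continuous_map T T f \<Longrightarrow> continuous_map T T (\<lambda>z. inv (f z))"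
proof -
  assume f: "continuous_map T T f"
  have "continuous_map T T ((\<lambda>x. inv x) \<circ> f)" by (rule continuous_map_compose[OF f ci])
  then show ?thesis by (simp add: comp_def)
qed

lemma cont_const: "a \<in> carrier G \<Longrightarrow> continuous_map T T (\<lambda>z. a)"
  using top by simp

lemma cont_id: "continuous_map T T (\<lambda>z. z)"
  using continuous_map_id unfolding id_def .

lemma closure_subgroup:
  assumes H: "subgroup H G" shows "subgroup (T closure_of H) G"
proof -
  have Hc: "H \<subseteq> carrier G" using H subgroup.subset by blast
  have Ht: "H \<subseteq> topspace T" using Hc top by simp
  show ?thesis
  proof (rule subgroupI)
    show "T closure_of H \<subseteq> carrier G" using closure_of_subset_topspace top by metis
  next
    show "T closure_of H \<noteq> {}" using closure_of_subset[OF Ht] subgroup.one_closed[OF H] by blast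
  next
    fix a assume a: "a \<in> T closure_of H"
    have "(\<lambda>x. inv x) ` (T closure_of H) \<subseteq> T closure_of ((\<lambda>x. inv x) ` H)"
      by (rule continuous_map_image_closure_subset[OF ci])
    also have "\<dots> \<subseteq> T closure_of H"
      by (rule closure_of_mono) (use subgroup.m_inv_closed[OF H] in blast)
    finally show "inv a \<in> T closure_of H" using a by blast
  next
    fix a b assume a: "a \<in> T closure_of H" and b: "b \<in> T closure_of H"
    have "(\<lambda>(x, y). x \<otimes> y) ` (prod_topology T T closure_of (H \<times> H)) \<subseteq>
          T closure_of ((\<lambda>(x, y). x \<otimes> y) ` (H \<times> H))"
      by (rule continuous_map_image_closure_subset[OF cm])
    also have "\<dots> \<subseteq> T closure_of H"
      by (rule closure_of_mono) (use subgroup.m_closed[OF H] in auto)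
    finally have "(\<lambda>(x, y). x \<otimes> y) ` ((T closure_of H) \<times> (T closure_of H)) \<subseteq> T closure_of H"
      by (simp add: closure_of_Times)
    then show "a \<otimes> b \<in> T closure_of H" using a b by blast
  qed
qed

lemma closure_normal:
  assumes H: "H \<lhd> G" shows "(T closure_of H) \<lhd> G"
proof -
  have sH: "subgroup H G" using H normal_imp_subgroup by blast
  show ?thesis unfolding normal_inv_iff
  proof (intro conjI ballI)
    show "subgroup (T closure_of H) G" by (rule closure_subgroup[OF sH])
  next
    fix x h assume x: "x \<in> carrier G" and h: "h \<in> T closure_of H"
    have cf: "continuous_map T T (\<lambda>z. x \<otimes> z \<otimes> inv x)"
      by (intro cont_mult cont_const cont_id) (use x in auto)
    have "(\<lambda>z. x \<otimes> z \<otimes> inv x) ` (T closure_of H) \<subseteq> T closure_of ((\<lambda>z. x \<otimes> z \<otimes> inv x) ` H)"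
      by (rule continuous_map_image_closure_subset[OF cf])
    also have "\<dots> \<subseteq> T closure_of H"
      by (rule closure_of_mono) (use normal_conj2[OF H x] in blast)
    finally show "x \<otimes> h \<otimes> inv x \<in> T closure_of H" using h by blast
  qed
qed

lemma cgen_sub: "S \<subseteq> carrier G \<Longrightarrow> subgroup (cgen G T S) G"
  unfolding cgen_def by (rule closure_subgroup[OF generate_is_subgroup])

lemma cgen_incl: "S \<subseteq> carrier G \<Longrightarrow> S \<subseteq> cgen G T S"
  unfolding cgen_def using closure_of_subset[of "generate G S" T] generate_incl top generate.incl
  by (metis subset_iff)

lemma cgen_minimal: "S \<subseteq> H \<Longrightarrow> subgroup H G \<Longrightarrow> closedin T H \<Longrightarrow> cgen G T S \<subseteq> H"
  unfolding cgen_def by (meson closure_of_minimal generate_subgroup_incl)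

lemma cgen_normal:
  assumes S: "S \<subseteq> carrier G" and cj: "\<And>h g. h \<in> S \<Longrightarrow> g \<in> carrier G \<Longrightarrow> g \<otimes> h \<otimes> inv g \<in> S"
  shows "cgen G T S \<lhd> G"
  unfolding cgen_def by (rule closure_normal[OF normal_generateI[OF S cj]])

lemma conj_pow: "g \<in> carrier G \<Longrightarrow> w \<in> carrier G \<Longrightarrow> g \<otimes> w [^] (n::nat) \<otimes> inv g = (g \<otimes> w \<otimes> inv g) [^] n"
proof (induction n)
  case 0 then show ?case by simp
next
  case (Suc n)
  have "g \<otimes> w [^] Suc n \<otimes> inv g = (g \<otimes> w [^] n \<otimes> inv g) \<otimes> (g \<otimes> w \<otimes> inv g)"
    using Suc.prems by (simp add: gs)
  then show ?case using Suc by simp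
qed

lemma pow_sub_normal:
  assumes N: "N \<lhd> G" shows "pow_sub G T N n \<lhd> G"
proof -
  have Nc: "N \<subseteq> carrier G" using N normal_imp_subgroup subgroup.subset by blast
  show ?thesis unfolding pow_sub_def
  proof (rule cgen_normal)
    show "{x [^] n |x. x \<in> N} \<subseteq> carrier G" using Nc by auto
  next
    fix h g assume h: "h \<in> {x [^] n |x. x \<in> N}" and g: "g \<in> carrier G"
    then obtain x where x: "x \<in> N" and hx: "h = x [^] n" by auto
    have "g \<otimes> h \<otimes> inv g = (g \<otimes> x \<otimes> inv g) [^] n" using conj_pow[OF g] x Nc hx by auto
    then show "g \<otimes> h \<otimes> inv g \<in> {x [^] n |x. x \<in> N}" using normal_conj2[OF N g x] by blast
  qed
qed

lemma pow_sub_closed: "closedin T (pow_sub G T N n)"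
  unfolding pow_sub_def cgen_def by simp

lemma comm_closed_set:
  assumes C: "closedin T C" and x: "x \<in> carrier G"
  shows "closedin T {z \<in> topspace T. gcomm G x z \<in> C}"
proof -
  have "continuous_map T T (\<lambda>z. gcomm G x z)" unfolding gcomm_def
    by (intro cont_mult cont_inv cont_const cont_id) (use x in auto)
  then show ?thesis using closedin_continuous_map_preimage C by blast
qed

lemma top_final:
  assumes N: "N \<lhd> G" and Cn: "C \<lhd> G" and Ccl: "closedin T C"
    and core: "\<And>x y. x \<in> N \<Longrightarrow> y \<in> carrier G \<Longrightarrow> gcomm G x (y [^] M) \<in> C"
  shows "comm_sub G T N (pow_sub G T (carrier G) M) \<subseteq> C"
proof -
  have sC: "subgroup C G" using Cn normal_imp_subgroup by blast
  have Nc: "N \<subseteq> carrier G" using N normal_imp_subgroup subgroup.subset by blast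
  define Z where "Z = {z \<in> carrier G. \<forall>x\<in>N. gcomm G x z \<in> C}"
  have Zeq: "Z = \<Inter> ((\<lambda>x. {z \<in> topspace T. gcomm G x z \<in> C}) ` N)"
    unfolding Z_def using top subgroup.one_closed[OF normal_imp_subgroup[OF N]] by auto
  have Zcl: "closedin T Z" unfolding Zeq
    by (rule closedin_Inter) (use comm_closed_set[OF Ccl] Nc subgroup.one_closed[OF normal_imp_subgroup[OF N]] in auto)
  have Zsub: "subgroup Z G"
  proof (rule subgroupI)
    show "Z \<subseteq> carrier G" unfolding Z_def by auto
  next
    show "Z \<noteq> {}" unfolding Z_def using Nc by (auto intro!: exI[of _ \<one>] subgroup.one_closed[OF sC])
  next
    fix a assume a: "a \<in> Z"
    show "inv a \<in> Z" unfolding Z_def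
    proof (intro CollectI conjI ballI)
      show "inv a \<in> carrier G" using a Z_def by auto
      fix x assume x: "x \<in> N"
      have "a \<in> {b \<in> carrier G. gcomm G x b \<in> C}" using a x Z_def by auto
      then show "gcomm G x (inv a) \<in> C" using subgroup.m_inv_closed[OF subgroup_centr_right[OF Cn]] x Nc by blast
    qed
  next
    fix a b assume a: "a \<in> Z" and b: "b \<in> Z"
    show "a \<otimes> b \<in> Z" unfolding Z_def
    proof (intro CollectI conjI ballI)
      show "a \<otimes> b \<in> carrier G" using a b Z_def by auto
      fix x assume x: "x \<in> N"
      have "a \<in> {b \<in> carrier G. gcomm G x b \<in> C}" "b \<in> {b \<in> carrier G. gcomm G x b \<in> C}"
        using a b x Z_def by auto
      then show "gcomm G x (a \<otimes> b) \<in> C" using subgroup.m_closed[OF subgroup_centr_right[OF Cn]] x Nc by blast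
    qed
  qed
  have KZ: "pow_sub G T (carrier G) M \<subseteq> Z" unfolding pow_sub_def
    by (rule cgen_minimal[OF _ Zsub Zcl]) (use core Z_def in auto)
  show ?thesis unfolding comm_sub_def
    by (rule cgen_minimal[OF _ sC Ccl]) (use KZ Z_def in auto)
qed

end



context tg begin

lemma cgen_carr: "cgen G T S \<subseteq> carrier G"
  unfolding cgen_def using closure_of_subset_topspace top by metis

lemma lcs_carr: "lcs G T n \<subseteq> carrier G"
  by (cases n) (auto simp: comm_sub_def dest: subsetD[OF cgen_carr])

lemma ccs_lcs: "ccs G (carrier G) t \<subseteq> lcs G T (Suc t)"
proof (induction t)
  case 0 then show ?case by simp
next
  case (Suc t)
  have S: "{gcomm G x y |x y. x \<in> lcs G T (Suc t) \<and> y \<in> carrier G} \<subseteq> carrier G"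
    using lcs_carr[of "Suc t"] by (auto intro!: gcomm_closed)
  have "ccs G (carrier G) (Suc t) \<subseteq> generate G {gcomm G x y |x y. x \<in> lcs G T (Suc t) \<and> y \<in> carrier G}"
    unfolding ccs.simps(2) by (rule mono_generate) (use Suc in blast)
  also have "\<dots> \<subseteq> cgen G T {gcomm G x y |x y. x \<in> lcs G T (Suc t) \<and> y \<in> carrier G}"
    unfolding cgen_def by (rule closure_of_subset) (use generate_incl[OF S] top in simp)
  also have "\<dots> = lcs G T (Suc (Suc t))" by (simp add: comm_sub_def)
  finally show ?case .
qed

lemma main_gen:
  assumes nil: "lcs G T (Suc c) = {\<one>}" and N: "N \<lhd> G"
    and dv: "\<And>t. 0 < t \<Longrightarrow> t < c \<Longrightarrow> q dvd (M choose t)"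
  shows "comm_sub G T N (pow_sub G T (carrier G) M) \<subseteq> pow_sub G T N q"
proof (rule top_final[OF N pow_sub_normal[OF N] pow_sub_closed])
  fix x y assume x: "x \<in> N" and y: "y \<in> carrier G"
  have Nc: "N \<subseteq> carrier G" using N normal_imp_subgroup subgroup.subset by blast
  have nl: "ccs G N c \<subseteq> {\<one>}" using ccs_mono_set[OF Nc, of c] ccs_lcs[of c] nil by blast
  have pw: "w [^] q \<in> pow_sub G T N q" if "w \<in> N" for w
    unfolding pow_sub_def by (rule subsetD[OF cgen_incl]) (use that Nc in auto)
  show "gcomm G x (y [^] M) \<in> pow_sub G T N q"
    by (rule core[OF N pow_sub_normal[OF N] pw nl dv x y])
qed

end

theorem lemma3p2:
  fixes G :: "('a, 'b) monoid_scheme" and T :: "'a topology" and p c k :: nat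
  assumes "Factorial_Ring.prime p"
    and "pro_p_group p G T"
    and "topologically_finitely_generated G T"
    and "nilpotency_class G T c"
  defines "K \<equiv> pow_sub G T (carrier G) (p ^ k)"
  shows "(odd p \<and> log (real p) (real c + 1) \<le> real k - 1 \<longrightarrow>
            (\<forall>N. N \<lhd> G \<and> closedin T N \<longrightarrow> comm_sub G T N K \<subseteq> pow_sub G T N p)
            \<and> powerful p G T K)
       \<and> (p = 2 \<and> log 2 (real c + 1) \<le> real k - 2 \<longrightarrow>
            (\<forall>N. N \<lhd> G \<and> closedin T N \<longrightarrow> comm_sub G T N K \<subseteq> pow_sub G T N 4)
            \<and> powerful p G T K)"
proof -
  have tgp: "topological_group G T" using assms(2) unfolding pro_p_group_def by blast
  then have grp: "group G" unfolding topological_group_def by blast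
  interpret tg G T
    using tgp unfolding topological_group_def by (intro tg.intro tg_axioms.intro) auto
  have nil: "lcs G T (Suc c) = {\<one>\<^bsub>G\<^esub>}" using assms(4) unfolding nilpotency_class_def by blast
  have p2: "2 \<le> p" using assms(1) prime_ge_2_nat by blast
  have Kn: "K \<lhd> G" unfolding K_def by (rule pow_sub_normal[OF normal_self])
  show ?thesis
  proof (intro conjI impI)
    assume h: "odd p \<and> log (real p) (real c + 1) \<le> real k - 1"
    have lb: "1 \<le> k \<and> c + 1 \<le> p ^ (k - 1)" using log_bound[OF p2, of c k 1] h by simp
    have dv: "p dvd (p ^ k choose t)" if "0 < t" "t < c" for t
    proof -
      have "t \<le> p ^ (k - 1)" using lb that by linarith
      then have "t * p ^ 1 \<le> p ^ (k - 1) * p" by simp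
      also have "\<dots> = p ^ k" using lb by (metis Suc_diff_le diff_Suc_1 power_Suc2)
      finally show ?thesis using binom_dvd[OF assms(1) that(1), of 1 k] by simp
    qed
    have gen: "comm_sub G T N K \<subseteq> pow_sub G T N p" if "N \<lhd> G" for N
      unfolding K_def by (rule main_gen[OF nil that dv])
    show "\<forall>N. N \<lhd> G \<and> closedin T N \<longrightarrow> comm_sub G T N K \<subseteq> pow_sub G T N p" using gen by blast
    show "powerful p G T K" unfolding powerful_def using gen[OF Kn] h by auto
  next
    assume h: "p = 2 \<and> log 2 (real c + 1) \<le> real k - 2"
    have lb: "2 \<le> k \<and> c + 1 \<le> 2 ^ (k - 2)" using log_bound[of 2 c k 2] h by simp
    have dv: "4 dvd (2 ^ k choose t)" if "0 < t" "t < c" for t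
    proof -
      have "t \<le> 2 ^ (k - 2)" using lb that by linarith
      then have "t * 2 ^ 2 \<le> 2 ^ (k - 2) * 2 ^ 2" by simp
      also have "\<dots> = (2::nat) ^ k" using lb by (metis le_add_diff_inverse2 power_add)
      finally show ?thesis using binom_dvd[of 2 t 2 k] that by simp
    qed
    have gen: "comm_sub G T N K \<subseteq> pow_sub G T N 4" if "N \<lhd> G" for N
      unfolding K_def using h by (intro main_gen[OF nil that]) (use dv h in auto)
    show "\<forall>N. N \<lhd> G \<and> closedin T N \<longrightarrow> comm_sub G T N K \<subseteq> pow_sub G T N 4" using gen by blast
    show "powerful p G T K" unfolding powerful_def using gen[OF Kn] h by auto
  qed
qed


end
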